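(* Let $n$ be even and let $G$ be a $k$-regular graph on $n$ vertices with $\mu(G)<k$. Then $n\ge 3k-2$. If moreover $n\le 3k-1$, then $\mu(G)=k-1$.
   Context: All graphs are finite and simple. For a graph $G=(V,E)$ on $n$ vertices, a fractional vertex cover is a function $f:V\to[0,\infty)$ with $f(u)+f(v)\ge 1$ for every edge $uv\in E$; $\tau^*(G)$ denotes the minimum of $\sum_{v\in V}f(v)$ over all fractional vertex covers. For $E'\subseteq E$ let $G-E'=(V,E\setminus E')$. Define $\mu(G)=\min\{|E'| : E'\subseteq E,\ \tau^*(G-E')<n/2\}$. *)

theory Defs
  imports Main "HOL.Real"
begin

definition simple_graph :: "'a set \<Rightarrow> 'a set set \<Rightarrow> bool" where
  "simple_graph V E \<longleftrightarrow> finite V \<and>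
     (\<forall>e\<in>E. \<exists>u v. u \<noteq> v \<and> u \<in> V \<and> v \<in> V \<and> e = {u, v})"

definition degree :: "'a set set \<Rightarrow> 'a \<Rightarrow> nat" where
  "degree E v = card {e \<in> E. v \<in> e}"

definition regular :: "'a set \<Rightarrow> 'a set set \<Rightarrow> nat \<Rightarrow> bool" where
  "regular V E k \<longleftrightarrow> (\<forall>v\<in>V. degree E v = k)"

definition frac_vertex_cover :: "'a set \<Rightarrow> 'a set set \<Rightarrow> ('a \<Rightarrow> real) \<Rightarrow> bool" where
  "frac_vertex_cover V E f \<longleftrightarrow> (\<forall>v\<in>V. f v \<ge> 0) \<and>
     (\<forall>u v. {u, v} \<in> E \<longrightarrow> f u + f v \<ge> 1)"

text \<open>Fractional vertex cover number (the minimum exists; we take the infimum).\<close>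
definition tau_star :: "'a set \<Rightarrow> 'a set set \<Rightarrow> real" where
  "tau_star V E = Inf {sum f V | f. frac_vertex_cover V E f}"

definition mu :: "'a set \<Rightarrow> 'a set set \<Rightarrow> nat" where
  "mu V E = (LEAST m. \<exists>E'\<subseteq>E. card E' = m \<and> tau_star V (E - E') < real (card V) / 2)"

end

theory Submission
  imports Defs
begin

lemma arith_core:
  fixes k m s t r A :: int
  assumes nn: "0 \<le> m" "0 \<le> t" "0 \<le> r" "0 \<le> A"
    and ts: "t < s" and mk: "m < k"
    and ev: "even (s+t+r)"
    and h1: "k*(s-t) \<le> 2*m"
    and h2: "k*r + k*(s-t) \<le> r*(r-1) + 2*m"
    and h3: "k*s \<le> s*t + A + m" and hA: "A \<le> m" and hA2: "2*A \<le> s*(s-1)"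
  shows "s+t+r \<ge> 3*k-2 \<and> (m \<le> k-2 \<longrightarrow> s+t+r \<ge> 3*k)"
proof -
  have k1: "k \<ge> 1" using nn mk by simp
  have "k \<le> k*(s-t)" using ts k1 by simp
  have r0: "r \<noteq> 0"
  proof
    assume "r = 0"
    then have "even (s - t)" using ev
      by (metis add.right_neutral diff_add_cancel even_add mult_2 add_diff_cancel_right')
    then have "s - t \<ge> 2" using ts by presburger
    then have "k*(s-t) \<ge> k*2" using k1 by (intro mult_left_mono) auto
    then show False using h1 mk by linarith
  qed
  have "k*(s-t) \<ge> k" using ts k1 by simp
  then have "k*r + k \<le> r*(r-1) + 2*m" using h2 by linarith
  then have "(r-1)*(r-k) \<ge> 2 + 2*(k-1-m)" by (simp add: algebra_simps)
  moreover have "2 + 2*(k-1-m) > 0" using mk by simp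
  ultimately have rpos: "(r-1)*(r-k) > 0" by (meson less_le_trans)
  have rk: "r \<ge> k+1"
  proof (rule ccontr)
    assume "\<not> ?thesis"
    then have "r - k \<le> 0" by simp
    moreover have "r - 1 \<ge> 0" using r0 nn by simp
    ultimately have "(r-1)*(r-k) \<le> 0" by (simp add: mult_nonneg_nonpos)
    then show False using rpos by simp
  qed
  show ?thesis
  proof (cases "t \<ge> k - 1")
    case True
    then show ?thesis using ts rk by linarith
  next
    case False
    then have kt: "k - t \<ge> 2" by simp
    show ?thesis
    proof (cases "t = 0")
      case True
      then have "k*s \<le> A + m" using h3 by simp
      show ?thesis
      proof (cases "s = 1")
        case True
        then show ?thesis using \<open>k*s \<le> A + m\<close> hA2 mk by simp
      next
        case False
        then have "s \<ge> 2" using ts \<open>t=0\<close> by simp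
        then have "k*s \<ge> k*2" using k1 by (intro mult_left_mono) auto
        then show ?thesis using \<open>k*s \<le> A + m\<close> hA mk by linarith
      qed
    next
      case tpos: False
      have "(t+1)*(k-t) \<le> s*(k-t)" using ts kt by (intro mult_right_mono) auto
      also have "\<dots> \<le> A + m" using h3 by (simp add: algebra_simps)
      finally have "(t+1)*(k-t) \<le> A + m" .
      moreover have "(t+1)*(k-t) - (2*k-2) = (t-1)*(k-2-t)" by (simp add: algebra_simps)
      moreover have "(t-1)*(k-2-t) \<ge> 0" using tpos nn kt by simp
      ultimately have eq: "(t-1)*(k-2-t) = 0" "A = m" "m = k-1" "s*(k-t) = (t+1)*(k-t)"
        using hA mk \<open>s*(k-t) \<le> A + m\<close> \<open>(t+1)*(k-t) \<le> s*(k-t)\<close> by linarith+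
      then have "s = t+1" using kt by simp
      from eq(1) have "t = 1 \<or> t = k-2" by auto
      then show ?thesis
      proof
        assume "t = 1"
        then have "s = 2" using \<open>s = t+1\<close> by simp
        then have "A \<le> 1" using hA2 by simp
        then show ?thesis using eq \<open>t=1\<close> kt by linarith
      next
        assume "t = k-2"
        then show ?thesis using \<open>s = t+1\<close> rk eq by linarith
      qed
    qed
  qed
qed

lemma majorize:
  fixes g :: "'a \<Rightarrow> real"
  shows "finite V \<Longrightarrow> (\<forall>z>0. card {v\<in>V. g v \<le> -z} \<le> card {v\<in>V. g v \<ge> z}) \<Longrightarrow> 0 \<le> sum g V"
proof (induction "card V" arbitrary: V rule: less_induct)
  case less
  note fin = less.prems(1) and hyp = less.prems(2)
  show ?case
  proof (cases "\<exists>v\<in>V. g v < 0")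
    case False
    then show ?thesis by (intro sum_nonneg) (auto simp: not_less)
  next
    case True
    define W where "W = {v\<in>V. g v < 0}"
    have fW: "finite W" "W \<noteq> {}" using True fin unfolding W_def by auto
    have "Min (g ` W) \<in> g ` W" using fW by (intro Min_in) auto
    then obtain u where u: "u \<in> W" "g u = Min (g ` W)" by auto
    have umin: "\<forall>v\<in>V. g u \<le> g v"
    proof
      fix v assume "v \<in> V"
      show "g u \<le> g v"
      proof (cases "v \<in> W")
        case True then show ?thesis using u fW by simp
      next
        case False then show ?thesis using u \<open>v\<in>V\<close> unfolding W_def by auto
      qed
    qed
    have uV: "u \<in> V" "g u < 0" using u unfolding W_def by auto
    define z0 where "z0 = - g u"
    have z0: "z0 > 0" using uV z0_def by simp
    have "u \<in> {v\<in>V. g v \<le> -z0}" using uV z0_def by simp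
    then have "{v\<in>V. g v \<le> -z0} \<noteq> {}" by blast
    then have "card {v\<in>V. g v \<le> -z0} \<ge> 1" using fin
      by (simp add: Suc_le_eq card_gt_0_iff)
    then have "card {v\<in>V. g v \<ge> z0} \<ge> 1" using hyp z0 by (meson le_trans)
    then have "{v\<in>V. g v \<ge> z0} \<noteq> {}" by (metis card.empty not_one_le_zero)
    then obtain w where w: "w \<in> V" "g w \<ge> z0" by auto
    have wu: "w \<noteq> u" using w uV z0 by auto
    define V' where "V' = V - {u, w}"
    have fV': "finite V'" using fin V'_def by simp
    have cV': "card V' < card V" unfolding V'_def using fin uV w
      by (intro psubset_card_mono) auto
    have hyp': "\<forall>z>0. card {v\<in>V'. g v \<le> -z} \<le> card {v\<in>V'. g v \<ge> z}"
    proof (intro allI impI)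
      fix z :: real assume zp: "z > 0"
      show "card {v\<in>V'. g v \<le> -z} \<le> card {v\<in>V'. g v \<ge> z}"
      proof (cases "z \<le> z0")
        case True
        have e1: "{v\<in>V'. g v \<le> -z} = {v\<in>V. g v \<le> -z} - {u}"
          unfolding V'_def using w zp z0 True by auto
        have e2: "{v\<in>V'. g v \<ge> z} = {v\<in>V. g v \<ge> z} - {w}"
          unfolding V'_def using uV zp z0 True by auto
        have "u \<in> {v\<in>V. g v \<le> -z}" using uV z0_def True by simp
        moreover have "w \<in> {v\<in>V. g v \<ge> z}" using w True by simp
        ultimately show ?thesis unfolding e1 e2 using fin hyp zp
          by (simp add: card_Diff_singleton diff_le_mono)
      next
        case False
        have "{v\<in>V'. g v \<le> -z} = {}" unfolding V'_def using umin False z0_def by force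
        then show ?thesis by (metis card.empty le0)
      qed
    qed
    have "0 \<le> sum g V'" using less.hyps[OF cV' fV' hyp'] .
    moreover have "sum g V = g u + g w + sum g V'"
    proof -
      have eqV: "V = insert u (insert w V')" unfolding V'_def using uV w by auto
      have "u \<notin> insert w V'" "w \<notin> V'" using wu unfolding V'_def by auto
      then show ?thesis using fV' by (subst eqV) (simp add: sum.insert)
    qed
    moreover have "g u + g w \<ge> 0" using w z0_def by simp
    ultimately show ?thesis by linarith
  qed
qed


lemma sum_ind:
  assumes "finite E"
  shows "(\<Sum>e\<in>E. if P e then 1 else 0 :: int) = int (card {e\<in>E. P e})"
  using assms by (simp add: sum.If_cases Int_def)

lemma card_ind:
  assumes "finite X"
  shows "int (card (X \<inter> e)) = (\<Sum>v\<in>X. if v \<in> e then 1 else 0 :: int)"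
proof -
  have "(\<Sum>v\<in>X. if v \<in> e then 1 else 0 :: int) = int (card {v\<in>X. v\<in>e})" using sum_ind[OF assms] .
  moreover have "{v\<in>X. v\<in>e} = X \<inter> e" by auto
  ultimately show ?thesis by simp
qed

lemma double_count:
  assumes "finite X" "finite E"
  shows "(\<Sum>v\<in>X. int (degree E v)) = (\<Sum>e\<in>E. int (card (e \<inter> X)))"
proof -
  have "(\<Sum>v\<in>X. int (degree E v)) = (\<Sum>v\<in>X. \<Sum>e\<in>E. if v \<in> e then 1 else 0 :: int)"
    unfolding degree_def using sum_ind[OF assms(2)] by simp
  also have "\<dots> = (\<Sum>e\<in>E. \<Sum>v\<in>X. if v \<in> e then 1 else 0 :: int)" by (rule sum.swap)
  also have "\<dots> = (\<Sum>e\<in>E. int (card (e \<inter> X)))"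
    using card_ind[OF assms(1)] by (simp add: Int_commute)
  finally show ?thesis .
qed



lemma per_edge:
  assumes uv: "u \<noteq> v" "u \<in> V" "v \<in> V" and dis: "I \<inter> N = {}" and IV: "I \<subseteq> V" "N \<subseteq> V"
    and K: "\<not> b \<Longrightarrow> (u \<in> I \<longrightarrow> v \<in> N) \<and> (v \<in> I \<longrightarrow> u \<in> N)"
  shows "int (card ({u,v} \<inter> I)) - int (card ({u,v} \<inter> N)) \<le> 2 * (if b then 1 else 0)"
    "int (card ({u,v} \<inter> (V - I - N))) + int (card ({u,v} \<inter> I)) - int (card ({u,v} \<inter> N))
       \<le> 2 * (if {u,v} \<subseteq> V - I - N then 1 else 0) + 2 * (if b then 1 else 0)"
    "int (card ({u,v} \<inter> I)) \<le> (if {u,v} \<inter> I \<noteq> {} \<and> {u,v} \<inter> N \<noteq> {} then 1 else 0)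
       + (if {u,v} \<subseteq> I then 1 else 0) + (if b then 1 else 0)"
    "{u,v} \<subseteq> I \<Longrightarrow> b"
  using uv dis K
  by (cases "u \<in> I"; cases "v \<in> I"; cases "u \<in> N"; cases "v \<in> N"; cases b; auto simp: Int_insert_left)+



lemma extract_IN:
  assumes fin: "finite V"
    and Hsub: "\<forall>e\<in>H. \<exists>u v. u \<noteq> v \<and> u \<in> V \<and> v \<in> V \<and> e = {u, v}"
    and tau: "tau_star V H < real (card V) / 2"
  shows "\<exists>I N. I \<subseteq> V \<and> N \<subseteq> V \<and> I \<inter> N = {} \<and> card N < card I \<and>
           (\<forall>u v. {u, v} \<in> H \<longrightarrow> u \<in> I \<longrightarrow> v \<in> N)"
proof -
  define S where "S = {sum f V | f. frac_vertex_cover V H f}"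
  have "frac_vertex_cover V H (\<lambda>_. 1)" unfolding frac_vertex_cover_def by simp
  then have "S \<noteq> {}" unfolding S_def by blast
  moreover have "Inf S < real (card V) / 2" using tau unfolding tau_star_def S_def .
  ultimately obtain x where "x \<in> S" "x < real (card V) / 2" using cInf_lessD by blast
  then obtain f where f: "frac_vertex_cover V H f" "sum f V < real (card V) / 2"
    unfolding S_def by blast
  have "\<exists>y. y < 1/2 \<and> card {v\<in>V. f v \<ge> 1 - y} < card {v\<in>V. f v \<le> y}"
  proof (rule ccontr)
    assume H0: "\<not> ?thesis"
    define g where "g = (\<lambda>v. f v - 1/2)"
    have "\<forall>z>0. card {v\<in>V. g v \<le> -z} \<le> card {v\<in>V. g v \<ge> z}"
    proof (intro allI impI)
      fix z :: real assume "z > 0"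
      then have "\<not> card {v\<in>V. f v \<ge> 1 - (1/2 - z)} < card {v\<in>V. f v \<le> 1/2 - z}"
        using H0 by (metis diff_less_eq less_add_same_cancel1)
      moreover have "{v\<in>V. f v \<ge> 1 - (1/2 - z)} = {v\<in>V. g v \<ge> z}" unfolding g_def by auto
      moreover have "{v\<in>V. f v \<le> 1/2 - z} = {v\<in>V. g v \<le> -z}" unfolding g_def by auto
      ultimately show "card {v\<in>V. g v \<le> -z} \<le> card {v\<in>V. g v \<ge> z}" by simp
    qed
    then have "0 \<le> sum g V" using majorize fin by blast
    moreover have "sum g V = sum f V - real (card V) / 2"
      unfolding g_def by (simp add: sum_subtractf)
    ultimately show False using f(2) by simp
  qed
  then obtain y where y: "y < 1/2" "card {v\<in>V. f v \<ge> 1 - y} < card {v\<in>V. f v \<le> y}" by blast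
  show ?thesis
  proof (intro exI conjI)
    show "{v\<in>V. f v \<le> y} \<subseteq> V" "{v\<in>V. f v \<ge> 1 - y} \<subseteq> V" by auto
    show "{v\<in>V. f v \<le> y} \<inter> {v\<in>V. f v \<ge> 1 - y} = {}" using y(1) by auto
    show "card {v\<in>V. f v \<ge> 1 - y} < card {v\<in>V. f v \<le> y}" by (rule y(2))
    show "\<forall>u v. {u, v} \<in> H \<longrightarrow> u \<in> {v\<in>V. f v \<le> y} \<longrightarrow> v \<in> {v\<in>V. f v \<ge> 1 - y}"
    proof (intro allI impI)
      fix u v assume uv: "{u, v} \<in> H" and u: "u \<in> {v\<in>V. f v \<le> y}"
      have "f u + f v \<ge> 1" using f(1) uv unfolding frac_vertex_cover_def by blast
      moreover have "v \<in> V" using Hsub uv by (metis doubleton_eq_iff)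
      ultimately show "v \<in> {v\<in>V. f v \<ge> 1 - y}" using u by auto
    qed
  qed
qed


lemma two_subsets_bound:
  assumes "finite X" "\<forall>e\<in>E. card e = 2"
  shows "2 * card {e\<in>E. e \<subseteq> X} \<le> card X * (card X - 1)"
proof -
  have "{e\<in>E. e \<subseteq> X} \<subseteq> {Y. Y \<subseteq> X \<and> card Y = 2}" using assms(2) by auto
  moreover have "finite {Y. Y \<subseteq> X \<and> card Y = 2}" using assms(1) by simp
  ultimately have "card {e\<in>E. e \<subseteq> X} \<le> card {Y. Y \<subseteq> X \<and> card Y = 2}"
    by (rule card_mono[rotated])
  also have "\<dots> = card X choose 2" using n_subsets[OF assms(1)] by simp
  finally have "card {e\<in>E. e \<subseteq> X} \<le> card X choose 2" .
  then have "2 * card {e\<in>E. e \<subseteq> X} \<le> 2 * (card X choose 2)" by simp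
  also have "\<dots> = card X * (card X - 1)"
  proof -
    have "even (card X * (card X - 1))" by (cases "even (card X)") auto
    then show ?thesis by (simp add: choose_two dvd_mult_div_cancel)
  qed
  finally show ?thesis .
qed

lemma nat_int_pair:
  fixes x r :: nat
  assumes "2 * x \<le> r * (r - 1)"
  shows "2 * int x \<le> int r * (int r - 1)"
proof -
  have e: "int (r * (r - 1)) = int r * (int r - 1)" by (cases r) (simp_all add: algebra_simps)
  have "int (2 * x) \<le> int (r * (r - 1))" using assms by (rule of_nat_mono)
  then show ?thesis unfolding e by simp
qed

lemma core_main:
  assumes sg: "simple_graph V E" and ev: "even (card V)" and reg: "regular V E k"
    and E'E: "E' \<subseteq> E" and mk: "card E' < k"
    and tau: "tau_star V (E - E') < real (card V) / 2"
  shows "card V \<ge> 3 * k - 2 \<and> (card E' \<le> k - 2 \<longrightarrow> card V \<ge> 3 * k)"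
proof -
  have finV: "finite V" using sg unfolding simple_graph_def by simp
  have edges: "\<forall>e\<in>E. \<exists>u v. u \<noteq> v \<and> u \<in> V \<and> v \<in> V \<and> e = {u, v}"
    using sg unfolding simple_graph_def by simp
  have card2: "\<forall>e\<in>E. card e = 2" and EP: "E \<subseteq> Pow V"
  proof -
    have "card e = 2 \<and> e \<in> Pow V" if "e \<in> E" for e
    proof -
      have "\<exists>u v. u \<noteq> v \<and> u \<in> V \<and> v \<in> V \<and> e = {u, v}" using edges that by (rule bspec)
      then obtain u v where "u \<noteq> v" "u \<in> V" "v \<in> V" "e = {u, v}" by (elim exE conjE)
      then show ?thesis by simp
    qed
    then show "\<forall>e\<in>E. card e = 2" "E \<subseteq> Pow V" by auto
  qed
  have finE: "finite E" using finV EP finite_subset by blast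
  have "\<forall>e\<in>E - E'. \<exists>u v. u \<noteq> v \<and> u \<in> V \<and> v \<in> V \<and> e = {u, v}" using edges by (meson DiffD1)
  from extract_IN[OF finV this tau] obtain I N where IN: "I \<subseteq> V" "N \<subseteq> V" "I \<inter> N = {}"
    "card N < card I" "\<forall>u v. {u, v} \<in> E - E' \<longrightarrow> u \<in> I \<longrightarrow> v \<in> N" by blast
  define R where "R = V - I - N"
  define s where "s = card I"
  define t where "t = card N"
  define r where "r = card R"
  define m where "m = card E'"
  have finI: "finite I" "finite N" "finite R" using IN finV R_def by (auto intro: finite_subset)
  have cardV: "card V = s + t + r"
  proof -
    have "V = I \<union> N \<union> R" using IN R_def by auto
    moreover have "(I \<union> N) \<inter> R = {}" "I \<inter> N = {}" using R_def IN by auto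
    ultimately show ?thesis unfolding s_def t_def r_def using finI
      by (simp add: card_Un_disjoint)
  qed
  have degsum: "(\<Sum>e\<in>E. int (card (e \<inter> X))) = int k * int (card X)" if "X \<subseteq> V" for X
  proof -
    have "finite X" using that finV finite_subset by blast
    have "(\<Sum>e\<in>E. int (card (e \<inter> X))) = (\<Sum>v\<in>X. int (degree E v))"
      using double_count[OF \<open>finite X\<close> finE] by simp
    also have "\<dots> = (\<Sum>v\<in>X. int k)" using reg that unfolding regular_def by (intro sum.cong) auto
    finally show ?thesis by simp
  qed
  have Kedge: "\<And>e. e \<in> E \<Longrightarrow> \<exists>u v. u \<noteq> v \<and> u \<in> V \<and> v \<in> V \<and> e = {u, v} \<and>
       (e \<notin> E' \<longrightarrow> (u \<in> I \<longrightarrow> v \<in> N) \<and> (v \<in> I \<longrightarrow> u \<in> N))"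
  proof -
    fix e assume "e \<in> E"
    then have "\<exists>u v. u \<noteq> v \<and> u \<in> V \<and> v \<in> V \<and> e = {u, v}" using edges by (rule bspec[rotated])
    then obtain u v where uv: "u \<noteq> v" "u \<in> V" "v \<in> V" "e = {u, v}" by (elim exE conjE)
    have "e \<notin> E' \<longrightarrow> (u \<in> I \<longrightarrow> v \<in> N) \<and> (v \<in> I \<longrightarrow> u \<in> N)"
      using IN(5) uv(4) \<open>e\<in>E\<close> by (metis DiffI insert_commute)
    then show "?thesis e" using uv by blast
  qed
  note PE = per_edge[OF _ _ _ IN(3) IN(1) IN(2)]
  have ind_m: "(\<Sum>e\<in>E. if e \<in> E' then 1 else 0 :: int) = int m"
  proof -
    have "{e\<in>E. e \<in> E'} = E'" using E'E by auto
    then show ?thesis using sum_ind[OF finE, of "\<lambda>e. e \<in> E'"] m_def by simp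
  qed
  have "(\<Sum>e\<in>E. int (card (e \<inter> I)) - int (card (e \<inter> N))) \<le> (\<Sum>e\<in>E. 2 * (if e \<in> E' then 1 else 0))"
  proof (rule sum_mono)
    fix e assume "e \<in> E"
    from Kedge[OF this] obtain u v where "u \<noteq> v" "u \<in> V" "v \<in> V" "e = {u, v}"
      "e \<notin> E' \<longrightarrow> (u \<in> I \<longrightarrow> v \<in> N) \<and> (v \<in> I \<longrightarrow> u \<in> N)" by blast
    then show "int (card (e \<inter> I)) - int (card (e \<inter> N)) \<le> 2 * (if e \<in> E' then 1 else 0)"
      using PE(1)[of u v "e \<in> E'"] by blast
  qed
  then have h1: "int k * (int s - int t) \<le> 2 * int m"
    using degsum[OF IN(1)] degsum[OF IN(2)] ind_m unfolding s_def t_def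
    by (simp add: sum_subtractf sum_distrib_left[symmetric] algebra_simps)
  have "(\<Sum>e\<in>E. int (card (e \<inter> R)) + int (card (e \<inter> I)) - int (card (e \<inter> N))) \<le>
        (\<Sum>e\<in>E. 2 * (if e \<subseteq> R then 1 else 0) + 2 * (if e \<in> E' then 1 else 0))"
  proof (rule sum_mono)
    fix e assume "e \<in> E"
    from Kedge[OF this] obtain u v where "u \<noteq> v" "u \<in> V" "v \<in> V" "e = {u, v}"
      "e \<notin> E' \<longrightarrow> (u \<in> I \<longrightarrow> v \<in> N) \<and> (v \<in> I \<longrightarrow> u \<in> N)" by blast
    then show "int (card (e \<inter> R)) + int (card (e \<inter> I)) - int (card (e \<inter> N)) \<le>
        2 * (if e \<subseteq> R then 1 else 0) + 2 * (if e \<in> E' then 1 else 0)"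
      using PE(2)[of u v "e \<in> E'"] unfolding R_def by blast
  qed
  moreover have "R \<subseteq> V" using R_def by auto
  ultimately have "int k * int r + int k * int s - int k * int t \<le> 2 * int (card {e\<in>E. e \<subseteq> R}) + 2 * int m"
    using degsum[OF IN(1)] degsum[OF IN(2)] degsum[of R] ind_m sum_ind[OF finE, of "\<lambda>e. e \<subseteq> R"]
    unfolding s_def t_def r_def
    by (simp add: sum_subtractf sum.distrib sum_distrib_left[symmetric] algebra_simps)
  moreover have "2 * card {e\<in>E. e \<subseteq> R} \<le> r * (r - 1)"
    using two_subsets_bound[OF finI(3) card2] r_def by simp
  then have "2 * int (card {e\<in>E. e \<subseteq> R}) \<le> int r * (int r - 1)"
    by (rule nat_int_pair)
  ultimately have h2: "int k * int r + int k * (int s - int t) \<le> int r * (int r - 1) + 2 * int m"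
    by (simp add: algebra_simps)
  define A where "A = card {e\<in>E. e \<subseteq> I}"
  define P where "P = card {e\<in>E. e \<inter> I \<noteq> {} \<and> e \<inter> N \<noteq> {}}"
  have "(\<Sum>e\<in>E. int (card (e \<inter> I))) \<le>
        (\<Sum>e\<in>E. (if e \<inter> I \<noteq> {} \<and> e \<inter> N \<noteq> {} then 1 else 0) + (if e \<subseteq> I then 1 else 0) + (if e \<in> E' then 1 else 0))"
  proof (rule sum_mono)
    fix e assume "e \<in> E"
    from Kedge[OF this] obtain u v where "u \<noteq> v" "u \<in> V" "v \<in> V" "e = {u, v}"
      "e \<notin> E' \<longrightarrow> (u \<in> I \<longrightarrow> v \<in> N) \<and> (v \<in> I \<longrightarrow> u \<in> N)" by blast
    then show "int (card (e \<inter> I)) \<le> (if e \<inter> I \<noteq> {} \<and> e \<inter> N \<noteq> {} then 1 else 0) + (if e \<subseteq> I then 1 else 0) + (if e \<in> E' then 1 else 0)"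
      using PE(3)[of u v "e \<in> E'"] by blast
  qed
  then have h3': "int k * int s \<le> int P + int A + int m"
    using degsum[OF IN(1)] ind_m sum_ind[OF finE, of "\<lambda>e. e \<subseteq> I"]
      sum_ind[OF finE, of "\<lambda>e. e \<inter> I \<noteq> {} \<and> e \<inter> N \<noteq> {}"]
    unfolding s_def A_def P_def by (simp add: sum.distrib)
  have "{e\<in>E. e \<subseteq> I} \<subseteq> E'"
  proof
    fix e assume "e \<in> {e\<in>E. e \<subseteq> I}"
    then have "e \<in> E" "e \<subseteq> I" by auto
    from Kedge[OF this(1)] obtain u v where "u \<noteq> v" "u \<in> V" "v \<in> V" "e = {u, v}"
      "e \<notin> E' \<longrightarrow> (u \<in> I \<longrightarrow> v \<in> N) \<and> (v \<in> I \<longrightarrow> u \<in> N)" by blast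
    then show "e \<in> E'" using PE(4)[of u v "e \<in> E'"] \<open>e \<subseteq> I\<close> by blast
  qed
  then have hA: "A \<le> m" unfolding A_def m_def using E'E finE
    by (meson card_mono finite_subset)
  have "2 * A \<le> s * (s - 1)" using two_subsets_bound[OF finI(1) card2] A_def s_def by simp
  then have hA2: "2 * int A \<le> int s * (int s - 1)"
    by (rule nat_int_pair)
  have "{e\<in>E. e \<inter> I \<noteq> {} \<and> e \<inter> N \<noteq> {}} \<subseteq> (\<lambda>(a,b). {a,b}) ` (I \<times> N)"
  proof
    fix e assume "e \<in> {e\<in>E. e \<inter> I \<noteq> {} \<and> e \<inter> N \<noteq> {}}"
    then have "e \<in> E" "e \<inter> I \<noteq> {}" "e \<inter> N \<noteq> {}" by auto
    from Kedge[OF this(1)] obtain u v where "e = {u, v}" by blast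
    then show "e \<in> (\<lambda>(a,b). {a,b}) ` (I \<times> N)" using \<open>e \<inter> I \<noteq> {}\<close> \<open>e \<inter> N \<noteq> {}\<close> IN(3)
      by (auto simp: image_iff insert_commute)
  qed
  then have "P \<le> card ((\<lambda>(a,b). {a,b}) ` (I \<times> N))" unfolding P_def using finI
    by (intro card_mono) auto
  also have "\<dots> \<le> card (I \<times> N)" by (rule card_image_le) (use finI in auto)
  finally have "P \<le> s * t" unfolding s_def t_def by (simp add: card_cartesian_product)
  then have "int P \<le> int s * int t" by (simp add: of_nat_mult[symmetric] del: of_nat_mult)
  then have h3: "int k * int s \<le> int s * int t + int A + int m" using h3' by linarith
  have evi: "even (int s + int t + int r)" using ev cardV by (metis even_of_nat of_nat_add)
  have "int s + int t + int r \<ge> 3 * int k - 2 \<and> (int m \<le> int k - 2 \<longrightarrow> int s + int t + int r \<ge> 3 * int k)"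
    by (rule arith_core[of "int m" "int t" "int r" "int A" "int s" "int k"])
       (use h1 h2 h3 hA hA2 evi IN(4) mk m_def s_def t_def in auto)
  moreover have "int k * 1 \<le> int k * (int s - int t)"
    using IN(4) s_def t_def by (intro mult_left_mono) auto
  then have "int k \<ge> 2" using h1 mk m_def by linarith
  ultimately show ?thesis using cardV m_def by auto
qed

theorem lemma27:
  fixes V :: "'a set" and E :: "'a set set" and k :: nat
  assumes "simple_graph V E"
    and "even (card V)"
    and "regular V E k"
    and "\<exists>E'\<subseteq>E. tau_star V (E - E') < real (card V) / 2"
    and "mu V E < k"
  shows "card V \<ge> 3 * k - 2 \<and> (card V \<le> 3 * k - 1 \<longrightarrow> mu V E = k - 1)"
proof -
  let ?P = "\<lambda>m. \<exists>E'\<subseteq>E. card E' = m \<and> tau_star V (E - E') < real (card V) / 2"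
  have "\<exists>m. ?P m" using assms(4) by blast
  then have "?P (LEAST m. ?P m)" by (rule LeastI_ex)
  then have "?P (mu V E)" unfolding mu_def .
  then obtain E0 where E0: "E0 \<subseteq> E" "card E0 = mu V E" "tau_star V (E - E0) < real (card V) / 2"
    by blast
  have "card V \<ge> 3 * k - 2 \<and> (card E0 \<le> k - 2 \<longrightarrow> card V \<ge> 3 * k)"
    by (rule core_main[OF assms(1) assms(2) assms(3) E0(1) _ E0(3)]) (use E0(2) assms(5) in simp)
  then show ?thesis using E0(2) assms(5) by auto
qed

end
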